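(* Fix $M>0$ and $m\in(-1,0)$, and let $-2<a_2<a_1<0$. For $j=1,2$ let $r_j(x)=a_jx/(1+x)$, $$\alpha_{+j}=\frac{M}{r_j(M)}-\frac{r_j(M)}{2a_j r_j(m)},\qquad \beta_{+j}=\frac{M}{r_j(M)}+\frac{r_j(M)}{2a_j r_j(m)}=\frac{1+M}{a_j}+\frac{M(m+1)}{2a_jm(1+M)},$$ and assume $\beta_{+1}<0$ and $\beta_{+2}<0$. Define $z_{+j}(s)=M$ for $s\le\alpha_{+j}$, $z_{+j}(s)=M+\frac{a_j r_j(m)}{2}(s-\alpha_{+j})^2$ for $\alpha_{+j}\le s\le\beta_{+j}$, and $z_{+j}(s)=r_j(M)s$ for $\beta_{+j}\le s\le 0$. Then $z_{+1}(s)\le z_{+2}(s)$ for all $s\in[-1,0]$. *)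

theory Defs
  imports Complex_Main
begin

definition r_fun :: "real \<Rightarrow> real \<Rightarrow> real" where
  "r_fun a x = a * x / (1 + x)"

definition alpha_plus :: "real \<Rightarrow> real \<Rightarrow> real \<Rightarrow> real" where
  "alpha_plus a M m = M / r_fun a M - r_fun a M / (2 * a * r_fun a m)"

definition beta_plus :: "real \<Rightarrow> real \<Rightarrow> real \<Rightarrow> real" where
  "beta_plus a M m = M / r_fun a M + r_fun a M / (2 * a * r_fun a m)"

definition z_plus :: "real \<Rightarrow> real \<Rightarrow> real \<Rightarrow> real \<Rightarrow> real" where
  "z_plus a M m s =
     (if s \<le> alpha_plus a M m then M
      else if s \<le> beta_plus a M m
        then M + a * r_fun a m / 2 * (s - alpha_plus a M m)^2
      else r_fun a M * s)"

end

theory Submission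
  imports Defs
begin

definition FF :: "real \<Rightarrow> real \<Rightarrow> real \<Rightarrow> real" where
  "FF M m t = (let c = 1 + M; K = M*(1+m)/(2*m*(1+M)) in
     if t \<ge> c - K then M else if t \<ge> c + K then M + m/(2*(1+m)) * (t - (c-K))^2
     else M * t / (1+M))"

lemma alpha_eq:
  assumes "a < 0" "M > 0" "-1 < m" "m < 0"
  shows "alpha_plus a M m = ((1+M) - M*(1+m)/(2*m*(1+M))) / a"
    and "beta_plus a M m = ((1+M) + M*(1+m)/(2*m*(1+M))) / a"
proof -
  have nz: "a \<noteq> 0" "M \<noteq> 0" "1 + M \<noteq> 0" "1 + m \<noteq> 0" "m \<noteq> 0" using assms by auto
  have e1: "M / r_fun a M = (1+M)/a" using nz by (simp add: r_fun_def field_simps)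
  have e2: "r_fun a M / (2 * a * r_fun a m) = M*(1+m)/(2*m*(1+M)) / a"
  proof -
    have d: "2*m*(1+M) \<noteq> 0" "a*a*m*2*(1+M) \<noteq> 0" using nz by auto
    have "r_fun a M / (2 * a * r_fun a m) = (a*(M*(1+m))) / (a*(a*(2*m*(1+M))))"
      using nz by (simp add: r_fun_def field_simps)
    also have "\<dots> = M*(1+m)/(2*m*(1+M)) / a" using nz by simp
    finally show ?thesis .
  qed
  show "alpha_plus a M m = ((1+M) - M*(1+m)/(2*m*(1+M))) / a"
    unfolding alpha_plus_def e1 e2 by (simp add: diff_divide_distrib)
  show "beta_plus a M m = ((1+M) + M*(1+m)/(2*m*(1+M))) / a"
    unfolding beta_plus_def e1 e2 by (simp add: add_divide_distrib)
qed

lemma z_eq: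
  assumes "a < 0" "M > 0" "-1 < m" "m < 0"
  shows "z_plus a M m s = FF M m (a*s)"
proof -
  define c where "c = 1 + M"
  define K where "K = M*(1+m)/(2*m*(1+M))"
  have al: "alpha_plus a M m = (c - K)/a" and be: "beta_plus a M m = (c+K)/a"
    using alpha_eq[OF assms] by (simp_all add: c_def K_def)
  have i1: "(s \<le> (c-K)/a) = (a*s \<ge> c - K)" using assms(1)
    by (simp add: pos_le_divide_eq neg_le_divide_eq mult.commute)
  have i2: "(s \<le> (c+K)/a) = (a*s \<ge> c + K)" using assms(1)
    by (simp add: neg_le_divide_eq mult.commute)
  have p: "a * r_fun a m / 2 * (s - (c-K)/a)^2 = m/(2*(1+m)) * (a*s - (c-K))^2"
  proof -
    have "(s - (c-K)/a) = (a*s - (c-K))/a" using assms(1) by (simp add: field_simps)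
    moreover have "a * r_fun a m = a^2 * m/(1+m)" by (simp add: r_fun_def power2_eq_square)
    ultimately show ?thesis using assms by (simp add: power_divide)
  qed
  have l: "r_fun a M * s = M * (a*s) / (1+M)" by (simp add: r_fun_def)
  have f: "FF M m t = (if t \<ge> c-K then M else if t \<ge> c+K then M + m/(2*(1+m))*(t-(c-K))^2 else M*t/(1+M))" for t
    by (simp add: FF_def Let_def c_def K_def)
  show ?thesis
    unfolding z_plus_def f al be i1 i2 p l by simp
qed

lemma FF_mono:
  assumes "M > 0" "-1 < m" "m < 0" "t1 \<le> t2"
    and bneg: "1 + M + M*(1+m)/(2*m*(1+M)) > 0"
  shows "FF M m t1 \<le> FF M m t2"
proof -
  define c where "c = 1 + M"
  define K where "K = M*(1+m)/(2*m*(1+M))"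
  define k where "k = m/(2*(1+m))"
  have Kneg: "K < 0" unfolding K_def using assms
    by (simp add: divide_pos_neg mult_pos_neg mult_neg_pos zero_less_mult_iff)
  have kneg: "k < 0" unfolding k_def using assms by (simp add: divide_neg_pos)
  have q: "c + K > 0" using bneg by (simp add: c_def K_def)
  have cpos: "c > 0" using assms by (simp add: c_def)
  have cont: "M + k * ((c+K) - (c-K))^2 = M * (c+K) / c"
  proof -
    have nz: "1+m \<noteq> 0" "m \<noteq> 0" "1+M \<noteq> 0" using assms by auto
    have "4*k*K = M/c" unfolding c_def K_def k_def using nz
      by (simp add: divide_eq_eq eq_divide_eq) (simp add: algebra_simps)
    then have "k*((c+K) - (c-K))^2 = (M/c)*K" by (simp add: power2_eq_square algebra_simps)
    then show ?thesis using cpos by (simp add: field_simps)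
  qed
  define F where "F t = (if t \<ge> c - K then M else if t \<ge> c + K then M + k * (t - (c-K))^2
     else M * t / c)" for t
  have FF: "FF M m t = F t" for t unfolding FF_def F_def Let_def c_def K_def k_def by simp
  have par: "M + k*(x - (c-K))^2 \<le> M + k*(y - (c-K))^2" if "x \<le> y" "y \<le> c - K" for x y
  proof -
    have "((c-K) - y)^2 \<le> ((c-K) - x)^2" using that by (intro power_mono) auto
    then have "(y - (c-K))^2 \<le> (x - (c-K))^2" by (simp add: power2_commute)
    then show ?thesis using kneg by (simp add: mult_left_mono_neg)
  qed
  have lin: "M * x / c \<le> M * y / c" if "x \<le> y" for x y
    using that assms cpos by (simp add: divide_right_mono)
  have Fle: "F t \<le> M" for t
  proof -
    have "k * (t - (c-K))^2 \<le> 0" using kneg by (simp add: mult_nonneg_nonpos2 mult_nonpos_nonneg)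
    moreover have "M * t / c \<le> M" if "t < c + K" using that assms cpos Kneg
      by (simp add: pos_divide_le_eq mult_left_mono)
    ultimately show ?thesis unfolding F_def by auto
  qed
  have "F t1 \<le> F t2"
  proof (cases "t2 \<ge> c - K")
    case True then show ?thesis using Fle by (simp add: F_def)
  next
    case F2: False
    show ?thesis
    proof (cases "t2 \<ge> c + K")
      case True
      then have e2: "F t2 = M + k*(t2 - (c-K))^2" using F2 by (simp add: F_def)
      show ?thesis
      proof (cases "t1 \<ge> c + K")
        case True then show ?thesis using e2 F2 assms(4) par[of t1 t2] by (simp add: F_def)
      next
        case False
        then have "F t1 = M * t1 / c" using Kneg by (simp add: F_def)
        also have "\<dots> \<le> M * (c+K)/c" using False by (intro lin) simp
        also have "\<dots> = M + k*((c+K) - (c-K))^2" using cont by simp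
        also have "\<dots> \<le> F t2" using e2 par[of "c+K" t2] True F2 by simp
        finally show ?thesis .
      qed
    next
      case False
      then show ?thesis using F2 assms(4) lin[of t1 t2] by (simp add: F_def)
    qed
  qed
  then show ?thesis by (simp add: FF)
qed

theorem lemma3p8:
  fixes M m a1 a2 :: real
  assumes "M > 0" and "-1 < m" and "m < 0"
    and "-2 < a2" and "a2 < a1" and "a1 < 0"
    and "beta_plus a1 M m < 0" and "beta_plus a2 M m < 0"
  shows "\<forall>s\<in>{-1..0}. z_plus a1 M m s \<le> z_plus a2 M m s"
proof
  fix s :: real assume s: "s \<in> {-1..0}"
  have b: "1 + M + M*(1+m)/(2*m*(1+M)) > 0"
  proof -
    have "beta_plus a1 M m = (1 + M + M*(1+m)/(2*m*(1+M))) / a1"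
      using alpha_eq(2)[of a1 M m] assms by simp
    then show ?thesis using assms(7,6) by (simp add: divide_less_0_iff)
  qed
  have "a1 * s \<le> a2 * s" using s assms by (simp add: mult_right_mono_neg)
  then show "z_plus a1 M m s \<le> z_plus a2 M m s"
    using z_eq[of a1 M m s] z_eq[of a2 M m s] FF_mono[OF assms(1-3) _ b] assms by simp
qed

end
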